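(* Let $K=2$ and suppose that for every horizon $T$ (a multiple of $100$) a valid pair $(\eta,\gamma)=(\eta_T,\gamma_T)$ in the non-trivial regime is chosen. Then there exists $T_0$ such that for all $T\ge T_0$, WSU-UX run on the two-phase loss sequence satisfies $$\Pr\bigl(\pi_{T_1+T_2+1,1}\ge\tfrac14\bigr)\ge 1-\frac{2}{T^2},\qquad T_2=\tfrac{2}{10}T.$$
   Context: WSU-UX. Fix integers $K\ge 2$ and $T\ge 1$ and hyperparameters $\eta,\gamma$. The pair $(\eta,\gamma)$ is called valid if $\eta,\gamma\in(0,1/2)$ and $\eta K/\gamma\le 1/2$. Given a fixed loss sequence $\ell_t\in[0,1]^K$, WSU-UX sets $\pi_{1,i}=1/K$ and in each round $t$: forms $\tilde\pi_{t,i}=(1-\gamma)\pi_{t,i}+\gamma/K$; draws $I_t$ with $\Pr(I_t=i\mid\mathcal F_{t-1})=\tilde\pi_{t,i}$; sets $\hat\ell_{t,i}=\ell_{t,i}\mathbf 1[I_t=i]/\tilde\pi_{t,i}$; and updates $\pi_{t+1,i}=\pi_{t,i}\bigl(1-\eta(\hat\ell_{t,i}-\sum_{j}\pi_{t,j}\hat\ell_{t,j})\bigr)$; $\mathcal F_t$ is the history generated by $I_1,\dots,I_t$. Non-trivial regime: $\eta\ge T^{-2/3}$ and $\gamma\le T^{-1/3}$. Two-phase loss sequence ($K=2$, $T$ a multiple of $100$, $T_1=T/100$): $\ell_{t,1}=1,\ell_{t,2}=0$ for $1\le t\le T_1$ and $\ell_{t,1}=0,\ell_{t,2}=1$ for $T_1<t\le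 T$. *)

theory Defs
  imports Complex_Main
begin

text \<open>A history of the first t draws I_1,...,I_t is
  stored as a list in REVERSE chronological order: [I_t, ..., I_1].
  wsu_pi K eta gamma loss h is the weight vector pi_{t+1} after history h
  (t = length h); loss t i is the loss of arm i in round t (t >= 1).\<close>

fun wsu_pi :: "nat \<Rightarrow> real \<Rightarrow> real \<Rightarrow> (nat \<Rightarrow> nat \<Rightarrow> real) \<Rightarrow> nat list \<Rightarrow> (nat \<Rightarrow> real)" where
  "wsu_pi K eta gamma loss [] = (\<lambda>i. 1 / real K)"
| "wsu_pi K eta gamma loss (a # h) =
     (let p = wsu_pi K eta gamma loss h;
          t = Suc (length h);
          pt = (\<lambda>i. (1 - gamma) * p i + gamma / real K);
          lhat = (\<lambda>i. if i = a then loss t i / pt i else 0)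
      in (\<lambda>i. p i * (1 - eta * (lhat i - (\<Sum>j\<in>{1..K}. p j * lhat j)))))"

definition wsu_mix :: "nat \<Rightarrow> real \<Rightarrow> (nat \<Rightarrow> real) \<Rightarrow> nat \<Rightarrow> real" where
  "wsu_mix K gamma p i = (1 - gamma) * p i + gamma / real K"

fun hist_prob :: "nat \<Rightarrow> real \<Rightarrow> real \<Rightarrow> (nat \<Rightarrow> nat \<Rightarrow> real) \<Rightarrow> nat list \<Rightarrow> real" where
  "hist_prob K eta gamma loss [] = 1"
| "hist_prob K eta gamma loss (a # h) =
     hist_prob K eta gamma loss h * wsu_mix K gamma (wsu_pi K eta gamma loss h) a"

definition histories :: "nat \<Rightarrow> nat \<Rightarrow> nat list set" where
  "histories K t = {h. length h = t \<and> set h \<subseteq> {1..K}}"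

definition wsu_prob :: "nat \<Rightarrow> real \<Rightarrow> real \<Rightarrow> (nat \<Rightarrow> nat \<Rightarrow> real) \<Rightarrow> nat \<Rightarrow> ((nat \<Rightarrow> real) \<Rightarrow> bool) \<Rightarrow> real" where
  "wsu_prob K eta gamma loss t P =
     (\<Sum>h\<in>histories K t. if P (wsu_pi K eta gamma loss h) then hist_prob K eta gamma loss h else 0)"

definition valid_pair :: "nat \<Rightarrow> real \<Rightarrow> real \<Rightarrow> bool" where
  "valid_pair K eta gamma \<longleftrightarrow> 0 < eta \<and> eta < 1/2 \<and> 0 < gamma \<and> gamma < 1/2 \<and> eta * real K / gamma \<le> 1/2"

definition nontrivial_regime :: "nat \<Rightarrow> real \<Rightarrow> real \<Rightarrow> bool" where
  "nontrivial_regime T eta gamma \<longleftrightarrow> eta \<ge> real T powr (-2/3) \<and> gamma \<le> real T powr (-1/3)"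

definition two_phase_loss :: "nat \<Rightarrow> nat \<Rightarrow> nat \<Rightarrow> real" where
  "two_phase_loss T t i =
     (if t \<le> T div 100 then (if i = 1 then 1 else 0) else (if i = 2 then 1 else 0))"

end

theory Submission
  imports Defs
begin

lemma sum12: "(\<Sum>j\<in>{1..2::nat}. f j) = (f 1 + f 2 :: real)" by (simp add: numeral_2_eq_2)

lemma step_formula:
  fixes e g :: real and T :: nat and h :: "nat list"
  assumes "a \<in> {1,2}"
  shows "wsu_pi 2 e g (two_phase_loss T) (a # h) 1 =
     (if Suc (length h) \<le> T div 100 then
        (if a = 1 then wsu_pi 2 e g (two_phase_loss T) h 1 * (1 - e * ((1 - wsu_pi 2 e g (two_phase_loss T) h 1) / ((1-g)*wsu_pi 2 e g (two_phase_loss T) h 1 + g/2))) else wsu_pi 2 e g (two_phase_loss T) h 1)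
      else (if a = 2 then wsu_pi 2 e g (two_phase_loss T) h 1 * (1 + e * (wsu_pi 2 e g (two_phase_loss T) h 2 / ((1-g)*wsu_pi 2 e g (two_phase_loss T) h 2 + g/2))) else wsu_pi 2 e g (two_phase_loss T) h 1))"
    and "wsu_pi 2 e g (two_phase_loss T) (a # h) 2 =
     (if Suc (length h) \<le> T div 100 then
        (if a = 1 then wsu_pi 2 e g (two_phase_loss T) h 2 * (1 + e * (wsu_pi 2 e g (two_phase_loss T) h 1 / ((1-g)*wsu_pi 2 e g (two_phase_loss T) h 1 + g/2))) else wsu_pi 2 e g (two_phase_loss T) h 2)
      else (if a = 2 then wsu_pi 2 e g (two_phase_loss T) h 2 * (1 - e * ((1 - wsu_pi 2 e g (two_phase_loss T) h 2) / ((1-g)*wsu_pi 2 e g (two_phase_loss T) h 2 + g/2))) else wsu_pi 2 e g (two_phase_loss T) h 2))"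
  using assms 
  by (simp only: wsu_pi.simps Let_def sum12; auto simp: two_phase_loss_def diff_divide_distrib)+

lemma finite_hist: "finite (histories K t)"
proof -
  have "histories K t = {xs. set xs \<subseteq> {1..K} \<and> length xs = t}" unfolding histories_def by auto
  thus ?thesis using finite_lists_length_eq[of "{1..K}" t] by simp
qed

lemma hist_Suc: "histories K (Suc t) = (\<lambda>(a,h). a#h) ` ({1..K} \<times> histories K t)"
proof (rule set_eqI)
  fix xs show "xs \<in> histories K (Suc t) \<longleftrightarrow> xs \<in> (\<lambda>(a,h). a#h) ` ({1..K} \<times> histories K t)"
  proof
    assume "xs \<in> histories K (Suc t)"
    then obtain a h where "xs = a # h" "a \<in> {1..K}" "h \<in> histories K t"
      unfolding histories_def by (cases xs) auto
    thus "xs \<in> (\<lambda>(a,h). a#h) ` ({1..K} \<times> histories K t)" by force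
  next
    assume "xs \<in> (\<lambda>(a,h). a#h) ` ({1..K} \<times> histories K t)"
    thus "xs \<in> histories K (Suc t)" unfolding histories_def by auto
  qed
qed

lemma sum_hist_Suc:
  "(\<Sum>h\<in>histories K (Suc t). f h) = (\<Sum>h\<in>histories K t. \<Sum>a\<in>{1..K}. f (a#h))"
proof -
  have inj: "inj_on (\<lambda>(a,h). a#h) ({1..K} \<times> histories K t)" by (auto simp: inj_on_def)
  have "(\<Sum>h\<in>histories K (Suc t). f h) = (\<Sum>x\<in>{1..K} \<times> histories K t. f ((\<lambda>(a,h). a#h) x))"
    unfolding hist_Suc by (rule sum.reindex[OF inj, unfolded comp_def])
  also have "\<dots> = (\<Sum>a\<in>{1..K}. \<Sum>h\<in>histories K t. f (a#h))"
    by (simp add: sum.cartesian_product case_prod_unfold)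
  also have "\<dots> = (\<Sum>h\<in>histories K t. \<Sum>a\<in>{1..K}. f (a#h))" by (rule sum.swap)
  finally show ?thesis .
qed

lemma key_pos: fixes e g x q :: real
  assumes "0<e" "4*e \<le> g" "g/2 \<le> q" "x \<le> 1"
  shows "e * x < q"
proof -
  have "e*x \<le> e" using assms by (simp add: mult_left_le)
  thus ?thesis using assms by linarith
qed

lemma inv:
  fixes e g :: real and T :: nat
  assumes "0<e" "e<1/2" "0<g" "g<1/2" "4*e \<le> g" 
  shows "set h \<subseteq> {1,2} \<Longrightarrow> 0 < wsu_pi 2 e g (two_phase_loss T) h 1 \<and> 0 < wsu_pi 2 e g (two_phase_loss T) h 2 \<and>
     wsu_pi 2 e g (two_phase_loss T) h 1 + wsu_pi 2 e g (two_phase_loss T) h 2 = 1"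
proof (induction h)
  case Nil thus ?case by simp
next
  case (Cons a h)
  define p1 where "p1 = wsu_pi 2 e g (two_phase_loss T) h 1"
  define p2 where "p2 = wsu_pi 2 e g (two_phase_loss T) h 2"
  have a: "a \<in> {1,2}" using Cons.prems by auto
  have ih: "0 < p1" "0 < p2" "p1 + p2 = 1" using Cons unfolding p1_def p2_def by auto
  define q1 where "q1 = (1-g)*p1 + g/2"
  define q2 where "q2 = (1-g)*p2 + g/2"
  have "0 \<le> (1-g)*p1" "0 \<le> (1-g)*p2" using ih assms by auto
  hence q1: "g/2 \<le> q1" "0 < q1" and q2: "g/2 \<le> q2" "0 < q2" using assms unfolding q1_def q2_def by auto
  have b1: "e * p2 < q1" "e * p1 < q1" "e*p1 < q2" "e*p2 < q2"
    using key_pos[OF assms(1) assms(5)] q1 q2 ih by auto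
  have f1: "1 - p1 = p2" "1 - p2 = p1" using ih by auto
  note sf = step_formula[OF a, of e g T h, folded p1_def p2_def q1_def q2_def, unfolded f1]
  have c1: "0 < 1 - e * (p2 / q1)" "0 < 1 - e * (p1 / q2)"
    using b1 q1 q2 by (auto simp: field_simps)
  have c2: "0 < 1 + e * (p1 / q1)" "0 < 1 + e * (p2 / q2)"
    using ih q1 q2 assms by (auto intro!: add_pos_nonneg)
  have m: "0 < p1 * (1 - e * (p2 / q1))" "0 < p2 * (1 - e * (p1 / q2))"
     "0 < p2 * (1 + e * (p1 / q1))" "0 < p1 * (1 + e * (p2 / q2))"
    using ih c1 c2 by auto
  have s: "p1 * (1 - e * (p2 / q1)) + p2 * (1 + e * (p1 / q1)) = 1"
     "p1 * (1 + e * (p2 / q2)) + p2 * (1 - e * (p1 / q2)) = 1"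
    using ih(3) by (simp_all add: algebra_simps)
  show ?case unfolding sf using ih m s by auto
qed

lemma set12: "{1..2::nat} = {1,2}" by auto

locale par =
  fixes e g :: real and T :: nat
  assumes e0: "0<e" and e1: "e<1/2" and g0: "0<g" and g1: "g<1/2" and eg: "4*e \<le> g"
begin

abbreviation P where "P \<equiv> wsu_pi 2 e g (two_phase_loss T)"
abbreviation HP where "HP \<equiv> hist_prob 2 e g (two_phase_loss T)"

lemma invP: "set h \<subseteq> {1,2} \<Longrightarrow> 0 < P h 1 \<and> 0 < P h 2 \<and> P h 1 + P h 2 = 1"
  using inv[OF e0 e1 g0 g1 eg] by blast

lemma hist_set: "h \<in> histories 2 t \<Longrightarrow> set h \<subseteq> {1,2}"
  unfolding histories_def set12 by auto

lemma mix_pos: "set h \<subseteq> {1,2} \<Longrightarrow> a \<in> {1,2} \<Longrightarrow> 0 \<le> wsu_mix 2 g (P h) a"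
  using invP[of h] g0 g1 unfolding wsu_mix_def by (auto intro!: add_nonneg_nonneg)

lemma mix_sum: "set h \<subseteq> {1,2} \<Longrightarrow> (\<Sum>a\<in>{1..2}. wsu_mix 2 g (P h) a) = 1"
proof -
  assume "set h \<subseteq> {1,2}"
  hence "P h 1 + P h 2 = 1" using invP by blast
  moreover have "(1-g) * P h 1 + g/2 + ((1-g) * P h 2 + g/2) = (1-g)*(P h 1 + P h 2) + g"
    by (simp add: algebra_simps)
  ultimately show ?thesis unfolding wsu_mix_def sum12 by simp
qed

lemma hp_nonneg: "set h \<subseteq> {1,2} \<Longrightarrow> 0 \<le> HP h"
  by (induction h) (auto intro!: mult_nonneg_nonneg mix_pos)

lemma hp_total: "(\<Sum>h\<in>histories 2 t. HP h) = 1"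
proof (induction t)
  case 0
  have "histories 2 0 = {[]}" unfolding histories_def by auto
  thus ?case by simp
next
  case (Suc t)
  have "(\<Sum>h\<in>histories 2 (Suc t). HP h) = (\<Sum>h\<in>histories 2 t. \<Sum>a\<in>{1..2}. HP (a#h))"
    by (rule sum_hist_Suc)
  also have "\<dots> = (\<Sum>h\<in>histories 2 t. HP h * (\<Sum>a\<in>{1..2}. wsu_mix 2 g (P h) a))"
    by (simp add: sum_distrib_left)
  also have "\<dots> = (\<Sum>h\<in>histories 2 t. HP h)"
    by (rule sum.cong[OF refl]) (metis mix_sum hist_set mult.right_neutral)
  finally show ?case using Suc by simp
qed


definition Phi :: "(nat \<Rightarrow> real) \<Rightarrow> real" where "Phi p = p 2 / p 1"

definition cf :: "nat \<Rightarrow> real" where "cf s = (if s \<le> T div 100 then 1 + 2*e else 1 - e/2)"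

lemma exp_step:
  assumes hs: "set h \<subseteq> {1,2}"
  shows "(\<Sum>a\<in>{1..2}. wsu_mix 2 g (P h) a * Phi (P (a#h))) \<le> cf (Suc (length h)) * Phi (P h)"
proof -
  define p1 where "p1 = P h 1"
  define p2 where "p2 = P h 2"
  have ih: "0 < p1" "0 < p2" "p1 + p2 = 1" using invP[OF hs] unfolding p1_def p2_def by auto
  define q1 where "q1 = (1-g)*p1 + g/2"
  define q2 where "q2 = (1-g)*p2 + g/2"
  have "0 \<le> (1-g)*p1" "0 \<le> (1-g)*p2" using ih g1 by auto
  hence q1: "g/2 \<le> q1" "0 < q1" and q2: "g/2 \<le> q2" "0 < q2" using g0 unfolding q1_def q2_def by auto
  have p2e: "p2 = 1 - p1" using ih by auto
  have q12: "q2 = 1 - q1" unfolding q1_def q2_def by (simp add: p2e algebra_simps)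
  have ep: "e * p1 \<le> e" "e * p2 \<le> e" using ih e0 by (auto simp: mult_left_le)
  have f1: "1 - p1 = p2" "1 - p2 = p1" using ih by auto
  have one: "(1::nat) \<in> {1,2}" and two: "(2::nat) \<in> {1,2}" by auto
  note sf1 = step_formula(1)[OF one, of e g T h, folded p1_def p2_def q1_def q2_def, unfolded f1]
  note sf2 = step_formula(2)[OF one, of e g T h, folded p1_def p2_def q1_def q2_def, unfolded f1]
  note sf3 = step_formula(1)[OF two, of e g T h, folded p1_def p2_def q1_def q2_def, unfolded f1]
  note sf4 = step_formula(2)[OF two, of e g T h, folded p1_def p2_def q1_def q2_def, unfolded f1]
  have mx: "wsu_mix 2 g (P h) 1 = q1" "wsu_mix 2 g (P h) 2 = q2"
    unfolding wsu_mix_def q1_def q2_def p1_def p2_def by auto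
  show ?thesis
  proof (cases "Suc (length h) \<le> T div 100")
    case True
    define D where "D = q1 - e * p2"
    have D: "0 < D" "q1 \<le> 2 * D" unfolding D_def using q1 ep eg by auto
    have r1: "p2 * (1 + e * (p1 / q1)) / (p1 * (1 - e * (p2 / q1))) = (p2/p1) * ((q1 + e*p1)/D)"
      unfolding D_def using q1 ih D by (simp add: field_simps D_def)
    have r2: "q1 * ((q1 + e*p1)/D) + q2 = 1 + e * q1 / D"
    proof -
      have "q1 * (q1 + e*p1) + q2 * D = D + e * q1"
        unfolding q12 D_def by (simp add: p2e algebra_simps)
      thus ?thesis using D by (simp add: field_simps)
    qed
    have r3: "e * q1 / D \<le> 2 * e" using D e0 by (simp add: field_simps)
    have "(\<Sum>a\<in>{1..2}. wsu_mix 2 g (P h) a * Phi (P (a#h))) = (p2/p1) * (q1 * ((q1 + e*p1)/D) + q2)"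
    proof -
      have n: "P (1#h) 1 = p1 * (1 - e * (p2 / q1))" "P (1#h) 2 = p2 * (1 + e * (p1 / q1))"
        "P (2#h) 1 = p1" "P (2#h) 2 = p2"
        using True sf1 sf2 sf3 sf4 by (simp_all del: wsu_pi.simps)
      show ?thesis unfolding sum12 mx Phi_def n r1 by (simp add: algebra_simps)
    qed
    also have "\<dots> \<le> (p2/p1) * (1 + 2*e)" unfolding r2 using r3 ih by (intro mult_left_mono) auto
    finally show ?thesis unfolding cf_def Phi_def p1_def p2_def using True by (simp add: mult.commute)
  next
    case False
    define D where "D = q2 + e * p2"
    have "0 < e * p2" using e0 ih by simp
    hence D: "0 < D" "D \<le> 2 * q2" unfolding D_def using q2 ep eg by auto
    have r1: "p2 * (1 - e * (p1 / q2)) / (p1 * (1 + e * (p2 / q2))) = (p2/p1) * ((q2 - e*p1)/D)"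
    proof -
      have a1: "p2 * (1 - e * (p1 / q2)) = p2 * (q2 - e*p1) / q2" using q2 by (simp add: field_simps)
      have a2: "p1 * (1 + e * (p2 / q2)) = p1 * D / q2" using q2 unfolding D_def by (simp add: field_simps)
      show ?thesis unfolding a1 a2 using q2 D ih by (simp add: field_simps)
    qed
    have r2: "q1 + q2 * ((q2 - e*p1)/D) = 1 - e * q2 / D"
    proof -
      have "q1 * D + q2 * (q2 - e*p1) = D - e * q2"
        unfolding D_def q12 by (simp add: p2e algebra_simps)
      thus ?thesis using D by (simp add: field_simps)
    qed
    have r3: "e / 2 \<le> e * q2 / D" using D e0 by (simp add: field_simps)
    have "(\<Sum>a\<in>{1..2}. wsu_mix 2 g (P h) a * Phi (P (a#h))) = (p2/p1) * (q1 + q2 * ((q2 - e*p1)/D))"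
    proof -
      have n: "P (2#h) 1 = p1 * (1 + e * (p2 / q2))" "P (2#h) 2 = p2 * (1 - e * (p1 / q2))"
        "P (1#h) 1 = p1" "P (1#h) 2 = p2"
        using False sf1 sf2 sf3 sf4 by (simp_all del: wsu_pi.simps)
      show ?thesis unfolding sum12 mx Phi_def n r1 by (simp add: algebra_simps)
    qed
    also have "\<dots> \<le> (p2/p1) * (1 - e/2)" unfolding r2 using r3 ih by (intro mult_left_mono) auto
    finally show ?thesis unfolding cf_def Phi_def p1_def p2_def using False by (simp add: mult.commute)
  qed
qed


lemma Phi_pos: "set h \<subseteq> {1,2} \<Longrightarrow> 0 < Phi (P h)"
  using invP[of h] unfolding Phi_def by auto

lemma E_bound:
  "(\<Sum>h\<in>histories 2 t. HP h * Phi (P h)) \<le> (1+2*e)^(min t (T div 100)) * (1-e/2)^(t - T div 100)"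
proof (induction t)
  case 0
  have "histories 2 0 = {[]}" unfolding histories_def by auto
  thus ?case by (simp add: Phi_def)
next
  case (Suc t)
  have cf0: "0 \<le> cf (Suc t)" unfolding cf_def using e0 e1 by auto
  have "(\<Sum>h\<in>histories 2 (Suc t). HP h * Phi (P h)) = (\<Sum>h\<in>histories 2 t. \<Sum>a\<in>{1..2}. HP (a#h) * Phi (P (a#h)))"
    by (rule sum_hist_Suc)
  also have "\<dots> = (\<Sum>h\<in>histories 2 t. HP h * (\<Sum>a\<in>{1..2}. wsu_mix 2 g (P h) a * Phi (P (a#h))))"
    by (simp add: sum_distrib_left mult.assoc del: wsu_pi.simps)
  also have "\<dots> \<le> (\<Sum>h\<in>histories 2 t. HP h * (cf (Suc t) * Phi (P h)))"
  proof (rule sum_mono)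
    fix h assume h: "h \<in> histories 2 t"
    hence "length h = t" unfolding histories_def by auto
    thus "HP h * (\<Sum>a\<in>{1..2}. wsu_mix 2 g (P h) a * Phi (P (a#h))) \<le> HP h * (cf (Suc t) * Phi (P h))"
      using exp_step[OF hist_set[OF h]] hp_nonneg[OF hist_set[OF h]] by (intro mult_left_mono) auto
  qed
  also have "\<dots> = cf (Suc t) * (\<Sum>h\<in>histories 2 t. HP h * Phi (P h))"
    by (simp add: sum_distrib_left algebra_simps)
  also have "\<dots> \<le> cf (Suc t) * ((1+2*e)^(min t (T div 100)) * (1-e/2)^(t - T div 100))"
    using Suc cf0 by (rule mult_left_mono)
  also have "\<dots> = (1+2*e)^(min (Suc t) (T div 100)) * (1-e/2)^(Suc t - T div 100)"
  proof (cases "Suc t \<le> T div 100")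
    case True
    hence "min (Suc t) (T div 100) = Suc (min t (T div 100))" "Suc t - T div 100 = 0" "t - T div 100 = 0" by auto
    thus ?thesis using True unfolding cf_def by simp
  next
    case False
    hence "min (Suc t) (T div 100) = min t (T div 100)" "Suc t - T div 100 = Suc (t - T div 100)" by auto
    thus ?thesis using False unfolding cf_def by simp
  qed
  finally show ?case .
qed

lemma prob_bound:
  "wsu_prob 2 e g (two_phase_loss T) t (\<lambda>p. p 1 \<ge> 1/4) \<ge> 1 - (\<Sum>h\<in>histories 2 t. HP h * Phi (P h)) / 3"
proof -
  have "(\<Sum>h\<in>histories 2 t. HP h) = (\<Sum>h\<in>histories 2 t. (if P h 1 \<ge> 1/4 then HP h else 0))
      + (\<Sum>h\<in>histories 2 t. (if P h 1 \<ge> 1/4 then 0 else HP h))"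
    by (simp add: sum.distrib[symmetric] if_distrib cong: if_cong)
  moreover have "(\<Sum>h\<in>histories 2 t. (if P h 1 \<ge> 1/4 then 0 else HP h)) \<le> (\<Sum>h\<in>histories 2 t. HP h * Phi (P h) / 3)"
  proof (rule sum_mono)
    fix h assume h: "h \<in> histories 2 t"
    note hs = hist_set[OF h]
    have hp: "0 \<le> HP h" using hp_nonneg[OF hs] .
    have ph: "0 < Phi (P h)" using Phi_pos[OF hs] .
    show "(if P h 1 \<ge> 1/4 then 0 else HP h) \<le> HP h * Phi (P h) / 3"
    proof (cases "P h 1 \<ge> 1/4")
      case True thus ?thesis using hp ph by simp
    next
      case False
      have i: "0 < P h 1" "P h 1 + P h 2 = 1" using invP[OF hs] by auto
      hence "3 \<le> Phi (P h)" unfolding Phi_def using False by (simp add: field_simps)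
      hence "HP h * 3 \<le> HP h * Phi (P h)" using hp by (rule mult_left_mono)
      thus ?thesis using False by simp
    qed
  qed
  ultimately show ?thesis unfolding wsu_prob_def hp_total by (simp add: sum_divide_distrib)
qed

end


lemma num_bound:
  fixes x e :: real
  assumes x: "10^42 \<le> x" and e: "x powr (-2/3) \<le> e"
  shows "x^2 \<le> 6 * exp (8 * (e * x / 100))"
proof -
  have x0: "0 < x" using x by (smt (verit) zero_less_power)
  define u where "u = x powr (1/3)"
  have u0: "0 < u" unfolding u_def using x0 by simp
  have u3: "u^3 = x" unfolding u_def using x0 by (simp add: powr_power)
  have u6: "x^2 = u^6" unfolding u3[symmetric] by (simp add: power_mult[symmetric])
  have ex: "u \<le> e * x"
  proof -
    have "x powr (-2/3) * x = x powr (-2/3) * x powr 1" using x0 by simp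
    also have "\<dots> = u" unfolding u_def powr_add[symmetric] by simp
    finally have "u = x powr (-2/3) * x" by simp
    thus ?thesis using e x0 by (simp add: mult_right_mono)
  qed
  have u14: "10^14 \<le> u"
  proof (rule ccontr)
    assume "\<not> 10^14 \<le> u"
    hence "u^3 < (10^14)^3" using u0 by (intro power_strict_mono) auto
    thus False using u3 x by simp
  qed
  have "exp (8 * (u / 100)) = exp (8*u/700) ^ 7"
    using exp_of_nat_mult[of 7 "8*u/700"] by simp
  also have "\<dots> \<ge> (8*u/700)^7"
  proof -
    have "8*u/700 \<le> exp(8*u/700)" using exp_ge_add_one_self[of "8*u/700"] by linarith
    thus ?thesis using u0 by (intro power_mono) auto
  qed
  finally have e1: "(8*u/700)^7 \<le> exp (8 * (u / 100))" .
  have "exp (8 * (u / 100)) \<le> exp (8 * (e * x / 100))" using ex by simp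
  with e1 have e2: "(8*u/700)^7 \<le> exp (8 * (e * x / 100))" by linarith
  have "u^6 \<le> 6 * (8*u/700)^7"
  proof -
    have "(8*u/700)^7 = (8/700)^7 * u^7" by (simp add: power_mult_distrib power_divide)
    also have "u^7 = u * u^6" by (simp add: power_Suc[symmetric] del: power_Suc)
    finally have "(8*u/700)^7 = (8/700)^7 * u * u^6" by simp
    moreover have "1 \<le> 6 * ((8/700)^7 * u)"
    proof -
      have "1 \<le> 6 * ((8/700)^7 * (10^14::real))" by (simp add: power_divide)
      also have "\<dots> \<le> 6 * ((8/700)^7 * u)" using u14 by (intro mult_left_mono) auto
      finally show ?thesis .
    qed
    ultimately show ?thesis
    proof -
      assume A: "(8*u/700)^7 = (8/700)^7 * u * u^6" and B: "1 \<le> 6 * ((8/700)^7 * u)"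
      have "u^6 = 1 * u^6" by simp
      also have "\<dots> \<le> 6*((8/700)^7*u) * u^6" using B by (intro mult_right_mono) auto
      finally show ?thesis using A by (simp add: algebra_simps)
    qed
  qed
  thus ?thesis using u6 e2 by linarith
qed


theorem mainTheorem17:
  fixes eta gamma :: "nat \<Rightarrow> real"
  assumes "\<And>T. 0 < T \<Longrightarrow> 100 dvd T \<Longrightarrow>
             valid_pair 2 (eta T) (gamma T) \<and> nontrivial_regime T (eta T) (gamma T)"
  shows "\<exists>T0. \<forall>T\<ge>T0. 100 dvd T \<longrightarrow>
           wsu_prob 2 (eta T) (gamma T) (two_phase_loss T) (T div 100 + 2 * T div 10)
             (\<lambda>p. p 1 \<ge> 1/4)
           \<ge> 1 - 2 / (real T)^2"
proof (intro exI allI impI)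
  fix T :: nat assume T: "10^42 \<le> T" "100 dvd T"
  have T0: "0 < T" using T by (metis not_le zero_less_numeral zero_less_power dual_order.strict_trans2)
  define e where "e = eta T"
  define g where "g = gamma T"
  have vp: "valid_pair 2 e g" and nr: "nontrivial_regime T e g" using assms[OF T0 T(2)] unfolding e_def g_def by auto
  have ee0: "0<e" "e<1/2" and gg0: "0<g" "g<1/2" and eg0: "e * 2 / g \<le> 1/2" using vp unfolding valid_pair_def by auto
  have eg: "4*e \<le> g" using eg0 gg0 by (simp add: field_simps)
  interpret par e g T using ee0 gg0 eg by unfold_locales auto
  obtain m where m: "T = 100 * m" using T(2) by blast
  have N: "T div 100 + 2 * T div 10 = m + 20 * m" "T div 100 = m" using m by auto
  define E where "E = (\<Sum>h\<in>histories 2 (m + 20*m). HP h * Phi (P h))"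
  have EB: "E \<le> (1+2*e)^m * (1-e/2)^(20*m)" using E_bound[of "m + 20*m"] unfolding E_def N(2) by simp
  have "(1+2*e)^m \<le> exp (2*e)^m" using exp_ge_add_one_self[of "2*e"] ee0 by (intro power_mono) auto
  moreover have "(1-e/2)^(20*m) \<le> exp (-e/2)^(20*m)" using exp_ge_add_one_self[of "-e/2"] ee0 by (intro power_mono) auto
  moreover have "0 \<le> (1-e/2)^(20*m)" using ee0 by simp
  ultimately have "(1+2*e)^m * (1-e/2)^(20*m) \<le> exp (2*e)^m * exp (-e/2)^(20*m)"
    by (intro mult_mono) auto
  hence "E \<le> exp (2*e)^m * exp (-e/2)^(20*m)" using EB by linarith
  also have "\<dots> = exp (- (8 * (e * T / 100)))"
    unfolding exp_of_nat_mult[symmetric] exp_add[symmetric] using m by (simp add: algebra_simps)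
  finally have E1: "E \<le> exp (- (8 * (e * T / 100)))" .
  have nb: "(real T)^2 \<le> 6 * exp (8 * (e * real T / 100))"
  proof (rule num_bound)
    have "(10::real)^42 = real ((10::nat)^42)" by simp
    thus "10^42 \<le> real T" using T(1) by (metis of_nat_le_iff)
    show "real T powr (-2/3) \<le> e" using nr unfolding nontrivial_regime_def by simp
  qed
  have Tp: "0 < (real T)^2" using T0 by simp
  have "E / 3 \<le> 2 / (real T)^2"
  proof -
    have "E * (real T)^2 \<le> exp (- (8 * (e * T / 100))) * (6 * exp (8 * (e * real T / 100)))"
      using E1 nb Tp by (intro mult_mono) (auto simp: E_def intro!: sum_nonneg mult_nonneg_nonneg hp_nonneg[OF hist_set] less_imp_le[OF Phi_pos[OF hist_set]])
    also have "\<dots> = 6" by (simp add: exp_minus field_simps)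
    finally show ?thesis using Tp by (simp add: field_simps)
  qed
  thus "wsu_prob 2 (eta T) (gamma T) (two_phase_loss T) (T div 100 + 2 * T div 10) (\<lambda>p. p 1 \<ge> 1/4)
           \<ge> 1 - 2 / (real T)^2"
    using prob_bound[of "m + 20*m"] unfolding N(1) E_def[symmetric] e_def[symmetric] g_def[symmetric] by linarith
qed

end
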